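(* Let $\bar\ell,m,n,k$ satisfy $m<1+n/\bar\ell$, $1\le k\le m$, and let $q=2^t\ge n+k$. Then there exists an $[[n,k,d]]_q$ qudit CSS code $\mathcal Q$ with $d\ge\min(n-m+1,m-k+1)$ such that for any $e,\ell\le\bar\ell$, every $e$-variate polynomial $P$ over $\mathbb F_q$ of degree at most $\ell$, every $A\in[k]$ and every $\beta\in\mathbb F_q$, there is a transversal (depth-one, single-qudit-per-position) physical gate $\bigotimes_{i=1}^nU_P^{\beta_i}[i]$ on $e$ code blocks which acts on $\mathcal Q^{\otimes e}$, up to a global phase, as $\overline{U_P^\beta[A]}$, i.e. multiplies $\overline{\ket{u^{(1)}}}\cdots\overline{\ket{u^{(e)}}}$ by $(-1)^{\mathrm{tr}(\beta P(u^{(1)}_A,\dots,u^{(e)}_A))}$. In particular this includes single-index addressable $\mathsf{C^{(\ell-1)}Z}$ gates across $\ell$ blocks and addressable single-qudit gates $U_\ell^\beta$. Choosing $m=\lfloor n/\bar\ell\rfloor$ and $k=m/2$, the codes are asymptotically good over growing $q$ with rate and relative distance at least $1/(2\bar\ell)$ asymptotically. *)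

theory Defs
  imports Complex_Main
begin

text \<open>A vector of F_q^n is represented by a function nat => 'a that vanishes
  at positions >= n (positions are 0-based: 0..n-1).\<close>

definition vecs :: "nat \<Rightarrow> (nat \<Rightarrow> 'a::zero) set" where
  "vecs n = {x. \<forall>i\<ge>n. x i = 0}"

definition vadd :: "(nat \<Rightarrow> 'a::plus) \<Rightarrow> (nat \<Rightarrow> 'a) \<Rightarrow> (nat \<Rightarrow> 'a)" where
  "vadd x y = (\<lambda>i. x i + y i)"

definition vscale :: "'a::times \<Rightarrow> (nat \<Rightarrow> 'a) \<Rightarrow> (nat \<Rightarrow> 'a)" where
  "vscale c x = (\<lambda>i. c * x i)"

definition is_subspace :: "nat \<Rightarrow> (nat \<Rightarrow> 'a::field) set \<Rightarrow> bool" where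
  "is_subspace n C \<longleftrightarrow> C \<subseteq> vecs n \<and> (\<lambda>_. 0) \<in> C \<and>
     (\<forall>x\<in>C. \<forall>y\<in>C. vadd x y \<in> C) \<and> (\<forall>c. \<forall>x\<in>C. vscale c x \<in> C)"

definition dotp :: "nat \<Rightarrow> (nat \<Rightarrow> 'a::comm_ring) \<Rightarrow> (nat \<Rightarrow> 'a) \<Rightarrow> 'a" where
  "dotp n x y = (\<Sum>i<n. x i * y i)"

definition dual_code :: "nat \<Rightarrow> (nat \<Rightarrow> 'a::field) set \<Rightarrow> (nat \<Rightarrow> 'a) set" where
  "dual_code n C = {y \<in> vecs n. \<forall>x\<in>C. dotp n x y = 0}"

definition hwt :: "nat \<Rightarrow> (nat \<Rightarrow> 'a::zero) \<Rightarrow> nat" where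
  "hwt n x = card {i. i < n \<and> x i \<noteq> 0}"

text \<open>A qudit CSS code [[n,k]]_q given by F_q-linear classical codes C2 \<subseteq> C1 \<subseteq> F_q^n
  together with a linear encoding map Enc : F_q^k \<rightarrow> C1 whose image is a complement
  of C2 in C1 (so k = dim C1 - dim C2).\<close>

definition css_code ::
  "nat \<Rightarrow> nat \<Rightarrow> (nat \<Rightarrow> 'a::field) set \<Rightarrow> (nat \<Rightarrow> 'a) set \<Rightarrow> ((nat \<Rightarrow> 'a) \<Rightarrow> (nat \<Rightarrow> 'a)) \<Rightarrow> bool"
where
  "css_code n k C1 C2 Enc \<longleftrightarrow>
     is_subspace n C1 \<and> is_subspace n C2 \<and> C2 \<subseteq> C1 \<and>
     (\<forall>u\<in>vecs k. Enc u \<in> C1) \<and>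
     (\<forall>u\<in>vecs k. \<forall>v\<in>vecs k. Enc (vadd u v) = vadd (Enc u) (Enc v)) \<and>
     (\<forall>c. \<forall>u\<in>vecs k. Enc (vscale c u) = vscale c (Enc u)) \<and>
     (\<forall>x\<in>C1. \<exists>!p. p \<in> vecs k \<times> C2 \<and> x = vadd (Enc (fst p)) (snd p))"

text \<open>Distance of a CSS code: minimum Hamming weight of a nontrivial logical
  operator, i.e. of a vector in (C1 - C2) \<union> (C2^\<perp> - C1^\<perp>).  We state "distance \<ge> d".\<close>

definition css_distance_ge :: "nat \<Rightarrow> (nat \<Rightarrow> 'a::field) set \<Rightarrow> (nat \<Rightarrow> 'a) set \<Rightarrow> nat \<Rightarrow> bool" where
  "css_distance_ge n C1 C2 d \<longleftrightarrow>
     (\<forall>v \<in> (C1 - C2) \<union> (dual_code n C2 - dual_code n C1). d \<le> hwt n v)"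

text \<open>A state of one block of n qudits is a function from computational basis words
  (elements of vecs n) to amplitudes.\<close>

definition logical_state ::
  "(nat \<Rightarrow> 'a::field) set \<Rightarrow> ((nat \<Rightarrow> 'a) \<Rightarrow> (nat \<Rightarrow> 'a)) \<Rightarrow> (nat \<Rightarrow> 'a) \<Rightarrow> (nat \<Rightarrow> 'a) \<Rightarrow> complex"
where
  "logical_state C2 Enc u =
     (\<lambda>x. if x \<in> {vadd (Enc u) c | c. c \<in> C2} then complex_of_real (1 / sqrt (real (card C2))) else 0)"

text \<open>States on e blocks: basis indexed by xs with xs j \<in> vecs n for j < e (block j),
  xs j = 0 for j \<ge> e.  Tensor product of e single-block states.\<close>

definition blocks :: "nat \<Rightarrow> nat \<Rightarrow> (nat \<Rightarrow> nat \<Rightarrow> 'a::zero) set" where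
  "blocks n e = {xs. (\<forall>j<e. xs j \<in> vecs n) \<and> (\<forall>j\<ge>e. xs j = (\<lambda>_. 0))}"

definition tensor_state ::
  "nat \<Rightarrow> nat \<Rightarrow> (nat \<Rightarrow> (nat \<Rightarrow> 'a::zero) \<Rightarrow> complex) \<Rightarrow> (nat \<Rightarrow> nat \<Rightarrow> 'a) \<Rightarrow> complex" where
  "tensor_state n e \<psi> = (\<lambda>xs. if xs \<in> blocks n e then (\<Prod>j<e. \<psi> j (xs j)) else 0)"

definition apply_diag :: "('b \<Rightarrow> complex) \<Rightarrow> ('b \<Rightarrow> complex) \<Rightarrow> ('b \<Rightarrow> complex)" where
  "apply_diag f \<psi> = (\<lambda>x. f x * \<psi> x)"

text \<open>Absolute trace F_{2^t} \<rightarrow> F_2 (values 0 or 1 inside F_q).\<close>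

definition ftrace :: "nat \<Rightarrow> 'a::field \<Rightarrow> 'a" where
  "ftrace t x = (\<Sum>i<t. x ^ (2 ^ i))"

definition trsign :: "nat \<Rightarrow> 'a::field \<Rightarrow> complex" where
  "trsign t y = (if ftrace t y = 0 then 1 else -1)"

definition mono_exps :: "nat \<Rightarrow> nat \<Rightarrow> (nat \<Rightarrow> nat) set" where
  "mono_exps e l = {\<alpha>. (\<forall>i\<ge>e. \<alpha> i = 0) \<and> (\<Sum>i<e. \<alpha> i) \<le> l}"

definition mpoly_eval :: "nat \<Rightarrow> nat \<Rightarrow> ((nat \<Rightarrow> nat) \<Rightarrow> 'a::field) \<Rightarrow> (nat \<Rightarrow> 'a) \<Rightarrow> 'a" where
  "mpoly_eval e l c x = (\<Sum>\<alpha>\<in>mono_exps e l. c \<alpha> * (\<Prod>i<e. x i ^ \<alpha> i))"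

text \<open>The transversal physical gate \<Otimes>_{i<n} U_P^{\<beta>_i}[i] on e blocks, where U_P^b acts on the
  e qudits at position i (one in each block) by |y_1..y_e> \<mapsto> (-1)^{tr(b P(y))} |y_1..y_e>.\<close>

definition transversal_phase ::
  "nat \<Rightarrow> nat \<Rightarrow> ((nat \<Rightarrow> 'a::field) \<Rightarrow> 'a) \<Rightarrow> (nat \<Rightarrow> 'a) \<Rightarrow> (nat \<Rightarrow> nat \<Rightarrow> 'a) \<Rightarrow> complex" where
  "transversal_phase t n P \<beta>s = (\<lambda>xs. \<Prod>i<n. trsign t (\<beta>s i * P (\<lambda>j. xs j i)))"

end

theory Submission imports Defs "HOL-Computational_Algebra.Polynomial" begin

lemma fermat_fin:
  fixes x :: "'a::{finite,field}"
  assumes "x \<noteq> 0"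
  shows "x ^ (card (UNIV::'a set) - 1) = 1"
proof -
  let ?N = "UNIV - {0::'a}"
  have bij: "bij_betw (\<lambda>y. x*y) ?N ?N"
  proof (rule bij_betw_imageI)
    show "inj_on (\<lambda>y. x*y) ?N" using assms by (auto simp: inj_on_def)
    show "(\<lambda>y. x*y) ` ?N = ?N"
    proof
      show "(\<lambda>y. x*y) ` ?N \<subseteq> ?N" using assms by auto
      show "?N \<subseteq> (\<lambda>y. x*y) ` ?N"
      proof
        fix z assume "z \<in> ?N"
        then have "z = x * (z/x)" "z/x \<in> ?N" using assms by auto
        then show "z \<in> (\<lambda>y. x*y) ` ?N" by blast
      qed
    qed
  qed
  have "prod (\<lambda>y. x*y) ?N = prod id ?N"
    using prod.reindex_bij_betw[OF bij, of id] by simp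
  moreover have "prod (\<lambda>y. x*y) ?N = x ^ card ?N * prod id ?N"
    by (simp add: prod.distrib)
  moreover have "prod id ?N \<noteq> 0" by (simp)
  moreover have "card ?N = card (UNIV::'a set) - 1"
    by (simp add: card_Diff_singleton)
  ultimately show ?thesis by simp
qed

lemma fin_pow_card:
  fixes x :: "'a::{finite,field}"
  shows "x ^ card (UNIV::'a set) = x"
proof (cases "x = 0")
  case True
  have "card (UNIV::'a set) > 0" by (simp add: finite_UNIV_card_ge_0)
  then show ?thesis using True by (simp add: power_0_left)
next
  case False
  have c: "card (UNIV::'a set) = Suc (card (UNIV::'a set) - 1)"
    using finite_UNIV_card_ge_0[where 'a='a] by simp
  show ?thesis by (subst c, simp only: power_Suc fermat_fin[OF False]) simp
qed

lemma char2:
  assumes "card (UNIV :: 'a::{finite,field} set) = 2 ^ t" and "t \<ge> 1"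
  shows "(1::'a) + 1 = 0"
proof -
  have "odd (2^t - 1::nat)" using assms(2) by simp
  then have "(-1::'a) ^ (2^t - 1) = -1" by simp
  moreover have "(-1::'a) ^ (2^t - 1) = 1" using fermat_fin[of "-1::'a"] assms(1) by simp
  ultimately have "(-1::'a) = 1" by simp
  then show ?thesis by (metis add.right_inverse)
qed

context
  fixes t :: nat
  assumes cardq: "card (UNIV :: 'a::{finite,field} set) = 2 ^ t" and t1: "t \<ge> 1"
begin

lemma two0: "(x::'a) + x = 0"
proof -
  have "x + x = (1+1)*x" by (simp add: distrib_right)
  then show ?thesis using char2[OF cardq t1] by simp
qed

lemma frob2: "((a::'a) + b)^2 = a^2 + b^2"
proof -
  have "(a+b)^2 = a^2 + b^2 + (a*b + a*b)" by (simp add: power2_eq_square algebra_simps)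
  then show ?thesis using two0 by simp
qed

lemma frob: "((a::'a) + b)^(2^i) = a^(2^i) + b^(2^i)"
proof (induction i)
  case 0 then show ?case by simp
next
  case (Suc i)
  have "(a+b)^(2^Suc i) = ((a+b)^(2^i))^2" by (simp add: power_mult[symmetric] mult.commute)
  also have "\<dots> = (a^(2^i))^2 + (b^(2^i))^2" using Suc frob2 by simp
  also have "\<dots> = a^(2^Suc i) + b^(2^Suc i)" by (simp add: power_mult[symmetric] mult.commute)
  finally show ?case .
qed

lemma ftrace_add: "ftrace t ((a::'a) + b) = ftrace t a + ftrace t b"
  unfolding ftrace_def by (simp add: frob sum.distrib)

lemma sq_sum: "finite F \<Longrightarrow> (\<Sum>i\<in>F. f i)^2 = (\<Sum>i\<in>F. (f i :: 'a)^2)"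
  by (induction F rule: finite_induct) (simp_all add: frob2)

lemma ftrace_sq: "(ftrace t (y::'a))^2 = ftrace t y"
proof -
  obtain t' where t': "t = Suc t'" using t1 by (cases t) auto
  let ?f = "\<lambda>i. y ^ (2^i)"
  have "(ftrace t y)^2 = (\<Sum>i<t. (?f i)^2)" unfolding ftrace_def by (simp add: sq_sum)
  also have "\<dots> = (\<Sum>i<t. ?f (Suc i))" by (simp add: power_mult[symmetric] mult.commute)
  also have "\<dots> = (\<Sum>i<t'. ?f (Suc i)) + ?f t" by (simp add: t')
  also have "?f t = y" using fin_pow_card[of y] cardq by simp
  also have "(\<Sum>i<t'. ?f (Suc i)) + y = (\<Sum>i<t. ?f i)"
    unfolding t' sum.lessThan_Suc_shift by simp
  finally show ?thesis unfolding ftrace_def .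
qed

lemma ftrace01: "ftrace t (y::'a) = 0 \<or> ftrace t y = 1"
proof -
  have "ftrace t y * (ftrace t y - 1) = 0" using ftrace_sq[of y] by (simp add: power2_eq_square algebra_simps)
  then show ?thesis by simp
qed

lemma trsign_add: "trsign t ((a::'a) + b) = trsign t a * trsign t b"
proof -
  have c2: "(1::'a) + 1 = 0" by (rule two0)
  show ?thesis unfolding trsign_def ftrace_add
    using ftrace01[of a] ftrace01[of b] c2 by auto
qed

lemma trsign0: "trsign t (0::'a) = 1"
  unfolding trsign_def ftrace_def by (simp add: power_0_left)

lemma trsign_sum: "finite F \<Longrightarrow> trsign t (\<Sum>i\<in>F. (f i::'a)) = (\<Prod>i\<in>F. trsign t (f i))"
  by (induction F rule: finite_induct) (simp_all add: trsign0 trsign_add)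

end


definition lagb :: "'b set \<Rightarrow> ('b \<Rightarrow> 'a::field) \<Rightarrow> 'b \<Rightarrow> 'a poly" where
  "lagb S p i = (\<Prod>j\<in>S-{i}. smult (1/(p i - p j)) [:-p j, 1:])"

lemma lagb_poly: "poly (lagb S p i) x = (\<Prod>j\<in>S-{i}. (x - p j)/(p i - p j))"
  unfolding lagb_def poly_prod by (intro prod.cong refl) (simp add: divide_inverse mult.commute algebra_simps)

lemma lagb_eval:
  assumes "finite S" "inj_on p S" "i \<in> S" "j \<in> S"
  shows "poly (lagb S p i) (p j) = (if i = j then 1 else 0)"
proof (cases "i = j")
  case True
  have "\<And>j'. j' \<in> S - {i} \<Longrightarrow> p i \<noteq> p j'" using assms(2,3) by (auto dest: inj_onD)
  then have "(\<Prod>j'\<in>S-{i}. (p j - p j') / (p i - p j')) = 1"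
    using True by (intro prod.neutral) simp
  then show ?thesis unfolding lagb_poly using True by simp
next
  case False
  have "(\<Prod>j'\<in>S-{i}. (p j - p j') / (p i - p j')) = 0"
    using assms False by (intro prod_zero) auto
  then show ?thesis unfolding lagb_poly using False by simp
qed

lemma lagb_deg:
  assumes "finite S" "i \<in> S"
  shows "degree (lagb S p i) \<le> card S - 1"
proof -
  have "degree (lagb S p i) \<le> sum (degree \<circ> (\<lambda>j. smult (1/(p i - p j)) [:-p j, 1:])) (S-{i})"
    unfolding lagb_def using assms by (intro degree_prod_sum_le) auto
  also have "\<dots> \<le> sum (\<lambda>_. 1) (S - {i})"
    by (intro sum_mono) (simp add: le_trans[OF degree_smult_le])
  also have "\<dots> = card S - 1" using assms by simp
  finally show ?thesis .
qed

lemma interp: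
  fixes g :: "'a::field poly"
  assumes "finite S" "inj_on p S" "degree g < card S"
  shows "g = (\<Sum>i\<in>S. smult (poly g (p i)) (lagb S p i))"
proof (rule poly_eqI_degree[where A = "p ` S"])
  fix x assume "x \<in> p ` S"
  then obtain j where j: "j \<in> S" "x = p j" by auto
  have "poly (\<Sum>i\<in>S. smult (poly g (p i)) (lagb S p i)) x
      = (\<Sum>i\<in>S. poly g (p i) * (if i = j then 1 else 0))"
    unfolding poly_sum using j assms by (simp add: lagb_eval)
  also have "\<dots> = poly g x" using j assms(1) by (simp add: if_distrib sum.delta cong: if_cong)
  finally show "poly g x = poly (\<Sum>i\<in>S. smult (poly g (p i)) (lagb S p i)) x" by simp
next
  have cS: "card (p ` S) = card S" using assms by (simp add: card_image)
  then show "degree g < card (p ` S)" using assms by simp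
  have "degree (\<Sum>i\<in>S. smult (poly g (p i)) (lagb S p i)) \<le> card S - 1"
    using assms(1) by (intro degree_sum_le) (auto intro: le_trans[OF degree_smult_le] lagb_deg simp del: One_nat_def)
  then show "degree (\<Sum>i\<in>S. smult (poly g (p i)) (lagb S p i)) < card (p ` S)"
    using cS assms(3) by linarith
qed

lemma poly_zero_pts:
  fixes g :: "'a::field poly"
  assumes "finite S" "inj_on p S" "degree g < card S" "\<And>i. i \<in> S \<Longrightarrow> poly g (p i) = 0"
  shows "g = 0"
proof (rule poly_eqI_degree[where A = "p ` S"])
  have cS: "card (p ` S) = card S" using assms by (simp add: card_image)
  show "\<And>x. x \<in> p ` S \<Longrightarrow> poly g x = poly 0 x" using assms(4) by auto
  show "degree g < card (p ` S)" using cS assms by simp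
  show "degree (0::'a poly) < card (p ` S)" using cS assms by simp
qed

lemma interp_eval:
  fixes g :: "'a::field poly"
  assumes "finite S" "inj_on p S" "degree g < card S"
  shows "poly g z = (\<Sum>i\<in>S. poly (lagb S p i) z * poly g (p i))"
  by (subst interp[OF assms]) (simp add: poly_sum mult.commute)


lemma smult_sum_right: "smult c (\<Sum>i\<in>S. f i) = (\<Sum>i\<in>S. smult c (f i))"
  by (induct S rule: infinite_finite_induct) (simp_all add: smult_add_right)

definition ev :: "nat \<Rightarrow> (nat \<Rightarrow> 'a::field) \<Rightarrow> 'a poly \<Rightarrow> nat \<Rightarrow> 'a" where
  "ev n pt f = (\<lambda>i. if i < n then poly f (pt i) else 0)"

definition encp :: "nat \<Rightarrow> nat \<Rightarrow> (nat \<Rightarrow> 'a::field) \<Rightarrow> (nat \<Rightarrow> 'a) \<Rightarrow> 'a poly" where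
  "encp n k pt u = (\<Sum>A<k. smult (u A) (lagb {..<k} (\<lambda>B. pt (n+B)) A))"

lemma ev_add: "ev n pt (f + g) = vadd (ev n pt f) (ev n pt g)"
  unfolding ev_def vadd_def by auto
lemma ev_smult: "ev n pt (smult c f) = vscale c (ev n pt f)"
  unfolding ev_def vscale_def by auto
lemma ev_0: "ev n pt 0 = (\<lambda>_. 0)"
  unfolding ev_def by auto
lemma ev_vecs: "ev n pt f \<in> vecs n"
  unfolding ev_def vecs_def by auto

lemma subspace_image:
  assumes "0 \<in> Q" "\<And>f g. f \<in> Q \<Longrightarrow> g \<in> Q \<Longrightarrow> f + g \<in> Q" "\<And>c f. f \<in> Q \<Longrightarrow> smult c f \<in> Q"
  shows "is_subspace n (ev n pt ` Q)"
  unfolding is_subspace_def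
proof (intro conjI ballI allI)
  show "ev n pt ` Q \<subseteq> vecs n" using ev_vecs by auto
  show "(\<lambda>_. 0) \<in> ev n pt ` Q" using assms(1) ev_0[of n pt, symmetric] by (rule rev_image_eqI)
  fix x y assume "x \<in> ev n pt ` Q" "y \<in> ev n pt ` Q"
  then obtain f g where "f \<in> Q" "g \<in> Q" "x = ev n pt f" "y = ev n pt g" by blast
  then show "vadd x y \<in> ev n pt ` Q" using assms(2)[of f g] ev_add[of n pt f g] by (intro rev_image_eqI[of "f+g"]) auto
next
  fix c x assume "x \<in> ev n pt ` Q"
  then obtain f where "f \<in> Q" "x = ev n pt f" by blast
  then show "vscale c x \<in> ev n pt ` Q" using assms(3)[of f c] ev_smult[of n pt c f] by (intro rev_image_eqI[of "smult c f"]) auto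
qed

definition P1 :: "nat \<Rightarrow> 'a::field poly set" where "P1 m = {f. degree f < m}"
definition P2 :: "nat \<Rightarrow> nat \<Rightarrow> nat \<Rightarrow> (nat \<Rightarrow> 'a::field) \<Rightarrow> 'a poly set" where
  "P2 n k m pt = {f. degree f < m \<and> (\<forall>A<k. poly f (pt (n+A)) = 0)}"

lemma P1_sub: "0 < m \<Longrightarrow> is_subspace n (ev n pt ` P1 m)"
  by (rule subspace_image) (auto simp: P1_def intro: le_less_trans[OF degree_add_le_max] le_less_trans[OF degree_smult_le])

lemma P2_sub: "0 < m \<Longrightarrow> is_subspace n (ev n pt ` P2 n k m pt)"
  by (rule subspace_image) (auto simp: P2_def intro: le_less_trans[OF degree_add_le_max] le_less_trans[OF degree_smult_le])

context
  fixes n k m :: nat and pt :: "nat \<Rightarrow> 'a::field"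
  assumes inj: "inj_on pt {..<n+k}" and k1: "1 \<le> k" and km: "k \<le> m" and mn: "m \<le> n"
begin

lemma injA: "inj_on pt {..<n}" using inj by (rule inj_on_subset) auto
lemma injG: "inj_on (\<lambda>B. pt (n+B)) {..<k}"
proof (rule inj_onI)
  fix x y assume "x \<in> {..<k}" "y \<in> {..<k}" "pt (n+x) = pt (n+y)"
  then have "n + x = n + y" using inj_onD[OF inj, of "n+x" "n+y"] by simp
  then show "x = y" by simp
qed
lemma ptAG: "i < n \<Longrightarrow> A < k \<Longrightarrow> pt i \<noteq> pt (n+A)"
  using inj_onD[OF inj, of i "n+A"] by auto

lemma encp_eval: "A < k \<Longrightarrow> poly (encp n k pt u) (pt (n+A)) = u A"
proof -
  assume A: "A < k"
  have "poly (encp n k pt u) (pt (n+A)) = (\<Sum>B<k. u B * (if B = A then 1 else 0))"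
    unfolding encp_def poly_sum
  proof (intro sum.cong refl)
    fix B assume "B \<in> {..<k}"
    then show "poly (smult (u B) (lagb {..<k} (\<lambda>B. pt (n + B)) B)) (pt (n + A)) = u B * (if B = A then 1 else 0)"
      using lagb_eval[OF _ injG, of B A] A by simp
  qed
  also have "\<dots> = u A" using A by (simp add: if_distrib sum.delta cong: if_cong)
  finally show ?thesis .
qed

lemma encp_deg: "degree (encp n k pt u) < k"
proof -
  have "degree (encp n k pt u) \<le> k - 1"
    unfolding encp_def
  proof (intro degree_sum_le)
    fix B assume "B \<in> {..<k}"
    then have "degree (lagb {..<k} (\<lambda>B. pt (n + B)) B) \<le> card {..<k} - 1" by (intro lagb_deg) auto
    then show "degree (smult (u B) (lagb {..<k} (\<lambda>B. pt (n + B)) B)) \<le> k - 1"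
      using degree_smult_le[of "u B" "lagb {..<k} (\<lambda>B. pt (n + B)) B"] by simp
  qed simp
  then show ?thesis using k1 by linarith
qed

lemma encp_add: "encp n k pt (vadd u v) = encp n k pt u + encp n k pt v"
  unfolding encp_def vadd_def by (simp add: smult_add_left sum.distrib)

lemma encp_scale: "encp n k pt (vscale c u) = smult c (encp n k pt u)"
  unfolding encp_def vscale_def by (simp add: smult_sum_right)

lemma ev_inj:
  assumes "ev n pt f = ev n pt g" "degree f < n" "degree g < n"
  shows "f = g"
proof -
  have "f - g = 0"
  proof (rule poly_zero_pts[OF _ injA])
    show "degree (f - g) < card {..<n}" using assms degree_diff_le_max[of f g] by simp
    fix i assume "i \<in> {..<n}"
    then show "poly (f - g) (pt i) = 0" using fun_cong[OF assms(1), of i] by (simp add: ev_def)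
  qed simp
  then show ?thesis by simp
qed


lemma css: "css_code n k (ev n pt ` P1 m) (ev n pt ` P2 n k m pt) (\<lambda>u. ev n pt (encp n k pt u))"
  unfolding css_code_def
proof (intro conjI ballI allI P1_sub P2_sub)
  show "0 < m" "0 < m" using k1 km by auto
  show "ev n pt ` P2 n k m pt \<subseteq> ev n pt ` P1 m" unfolding P1_def P2_def by auto
  fix u :: "nat \<Rightarrow> 'a" assume "u \<in> vecs k"
  show "ev n pt (encp n k pt u) \<in> ev n pt ` P1 m"
    unfolding P1_def using encp_deg[of u] km by auto
next
  fix u v :: "nat \<Rightarrow> 'a" assume "u \<in> vecs k" "v \<in> vecs k"
  show "ev n pt (encp n k pt (vadd u v)) = vadd (ev n pt (encp n k pt u)) (ev n pt (encp n k pt v))"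
    by (simp add: encp_add ev_add)
next
  fix c and u :: "nat \<Rightarrow> 'a" assume "u \<in> vecs k"
  show "ev n pt (encp n k pt (vscale c u)) = vscale c (ev n pt (encp n k pt u))"
    by (simp add: encp_scale ev_smult)
next
  fix x assume "x \<in> ev n pt ` P1 m"
  then obtain f where f: "degree f < m" "x = ev n pt f" unfolding P1_def by auto
  let ?C2 = "ev n pt ` P2 n k m pt"
  let ?u0 = "\<lambda>A. if A < k then poly f (pt (n+A)) else 0"
  show "\<exists>!p. p \<in> vecs k \<times> ?C2 \<and> x = vadd (ev n pt (encp n k pt (fst p))) (snd p)"
  proof (rule ex_ex1I)
    have u0: "?u0 \<in> vecs k" unfolding vecs_def by auto
    have dg: "degree (f - encp n k pt ?u0) < m"
      using degree_diff_le_max[of f "encp n k pt ?u0"] f(1) encp_deg[of ?u0] km by linarith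
    have "f - encp n k pt ?u0 \<in> P2 n k m pt"
      unfolding P2_def using dg encp_eval[of _ ?u0] by auto
    moreover have "x = vadd (ev n pt (encp n k pt ?u0)) (ev n pt (f - encp n k pt ?u0))"
      unfolding f(2) ev_add[symmetric] by simp
    ultimately show "\<exists>p. p \<in> vecs k \<times> ?C2 \<and> x = vadd (ev n pt (encp n k pt (fst p))) (snd p)"
      using u0 by (intro exI[of _ "(?u0, ev n pt (f - encp n k pt ?u0))"]) auto
  next
    fix p q assume p: "p \<in> vecs k \<times> ?C2 \<and> x = vadd (ev n pt (encp n k pt (fst p))) (snd p)"
      and q: "q \<in> vecs k \<times> ?C2 \<and> x = vadd (ev n pt (encp n k pt (fst q))) (snd q)"
    obtain g where g: "g \<in> P2 n k m pt" "snd p = ev n pt g" using p by auto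
    obtain h where h: "h \<in> P2 n k m pt" "snd q = ev n pt h" using q by auto
    have "ev n pt (encp n k pt (fst p) + g) = ev n pt (encp n k pt (fst q) + h)"
      using p q g h by (simp add: ev_add)
    moreover have "degree (encp n k pt (fst p) + g) < n" "degree (encp n k pt (fst q) + h) < n"
      using degree_add_le_max[of "encp n k pt (fst p)" g] degree_add_le_max[of "encp n k pt (fst q)" h]
        encp_deg[of "fst p"] encp_deg[of "fst q"] g(1) h(1) km mn unfolding P2_def by auto
    ultimately have eq: "encp n k pt (fst p) + g = encp n k pt (fst q) + h" by (rule ev_inj)
    have "fst p = fst q"
    proof
      fix A show "fst p A = fst q A"
      proof (cases "A < k")
        case True
        have "poly (encp n k pt (fst p) + g) (pt (n+A)) = poly (encp n k pt (fst q) + h) (pt (n+A))"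
          by (simp only: eq)
        then show ?thesis using True g(1) h(1) encp_eval[OF True] unfolding P2_def by simp
      next
        case False
        then show ?thesis using p q unfolding vecs_def by auto
      qed
    qed
    moreover have "snd p = snd q"
    proof
      fix i
      have "x i = ev n pt (encp n k pt (fst p)) i + snd p i" using p by (simp add: vadd_def)
      moreover have "x i = ev n pt (encp n k pt (fst q)) i + snd q i" using q by (simp add: vadd_def)
      ultimately show "snd p i = snd q i" using \<open>fst p = fst q\<close> by simp
    qed
    ultimately show "p = q" by (simp add: prod_eq_iff)
  qed
qed


lemma dist1:
  assumes v: "v \<in> ev n pt ` P1 m - ev n pt ` P2 n k m pt"
  shows "n - m + 1 \<le> hwt n v"
proof -
  obtain f where f: "degree f < m" "v = ev n pt f" using v unfolding P1_def by auto
  have "f \<noteq> 0"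
  proof
    assume "f = 0"
    then have "f \<in> P2 n k m pt" using k1 km unfolding P2_def by auto
    then show False using v f(2) by auto
  qed
  let ?Z = "{i. i < n \<and> poly f (pt i) = 0}"
  have "card ?Z = card (pt ` ?Z)"
    by (rule card_image[symmetric], rule inj_on_subset[OF injA]) auto
  also have "\<dots> \<le> card {x. poly f x = 0}"
    by (intro card_mono poly_roots_finite \<open>f \<noteq> 0\<close>) auto
  also have "\<dots> \<le> degree f" by (rule card_poly_roots_bound[OF \<open>f \<noteq> 0\<close>])
  finally have cZ: "card ?Z \<le> m - 1" using f(1) by linarith
  have "{i. i < n \<and> v i \<noteq> 0} = {..<n} - ?Z" using f(2) by (auto simp: ev_def)
  moreover have "card ({..<n} - ?Z) = n - card ?Z"
    by (subst card_Diff_subset) auto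
  ultimately have "hwt n v = n - card ?Z" unfolding hwt_def by simp
  then show ?thesis using cZ mn k1 km by linarith
qed

lemma dist2:
  assumes y: "y \<in> dual_code n (ev n pt ` P2 n k m pt) - dual_code n (ev n pt ` P1 m)"
  shows "m - k + 1 \<le> hwt n y"
proof (rule ccontr)
  assume "\<not> m - k + 1 \<le> hwt n y"
  then have w: "hwt n y \<le> m - k" by simp
  have yv: "y \<in> vecs n" using y unfolding dual_code_def by auto
  have "y \<noteq> (\<lambda>_. 0)"
  proof
    assume "y = (\<lambda>_. 0)"
    then have "y \<in> dual_code n (ev n pt ` P1 m)" unfolding dual_code_def dotp_def vecs_def by auto
    then show False using y by auto
  qed
  then obtain i0 where "y i0 \<noteq> 0" by auto
  then have i0: "i0 < n" using yv unfolding vecs_def by (metis (mono_tags) mem_Collect_eq not_le)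
  let ?S = "{i. i < n \<and> y i \<noteq> 0}"
  have i0S: "i0 \<in> ?S" using i0 \<open>y i0 \<noteq> 0\<close> by auto
  have finS: "finite ?S" by auto
  have cS: "card ?S \<le> m - k" using w unfolding hwt_def .
  have cS1: "card ?S \<ge> 1" using i0S finS by (metis One_nat_def Suc_leI card_gt_0_iff empty_iff)
  define h where "h = (\<Prod>i\<in>?S-{i0}. [:-pt i, 1:])"
  define G where "G = (\<Prod>A<k. [:-pt (n+A), 1:])"
  define f where "f = G * h"
  have dh: "degree h \<le> card ?S - 1"
  proof -
    have "degree h \<le> sum (degree \<circ> (\<lambda>i. [:-pt i, 1:])) (?S-{i0})"
      unfolding h_def by (intro degree_prod_sum_le) auto
    also have "\<dots> = card (?S - {i0})" by simp
    finally show ?thesis using i0S finS by simp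
  qed
  have dG: "degree G \<le> k"
  proof -
    have "degree G \<le> sum (degree \<circ> (\<lambda>A. [:-pt (n+A), 1:])) {..<k}"
      unfolding G_def by (intro degree_prod_sum_le) auto
    also have "\<dots> = k" by simp
    finally show ?thesis .
  qed
  have df: "degree f < m"
    using degree_mult_le[of G h] dh dG cS cS1 km unfolding f_def by linarith
  have fG: "\<forall>A<k. poly f (pt (n+A)) = 0"
    unfolding f_def G_def poly_mult poly_prod by (auto intro!: prod_zero)
  have "ev n pt f \<in> ev n pt ` P2 n k m pt" using df fG unfolding P2_def by auto
  then have d0: "dotp n (ev n pt f) y = 0" using y unfolding dual_code_def by auto
  have "dotp n (ev n pt f) y = (\<Sum>i<n. if i = i0 then poly f (pt i0) * y i0 else 0)"
    unfolding dotp_def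
  proof (intro sum.cong refl)
    fix i assume "i \<in> {..<n}"
    show "ev n pt f i * y i = (if i = i0 then poly f (pt i0) * y i0 else 0)"
    proof (cases "i = i0 \<or> y i = 0")
      case True then show ?thesis using \<open>i \<in> {..<n}\<close> by (auto simp: ev_def)
    next
      case False
      then have "i \<in> ?S - {i0}" using \<open>i \<in> {..<n}\<close> by auto
      then have "poly h (pt i) = 0" unfolding h_def poly_prod using finS
        by (intro prod_zero) (auto intro!: bexI[of _ i])
      then show ?thesis using False \<open>i \<in> {..<n}\<close> by (auto simp: ev_def f_def)
    qed
  qed
  also have "\<dots> = poly f (pt i0) * y i0" using i0 by simp
  finally have "poly f (pt i0) * y i0 = 0" using d0 by simp
  moreover have "poly G (pt i0) \<noteq> 0"
    unfolding G_def poly_prod using ptAG i0 by (simp add: prod_zero_iff)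
  moreover have "poly h (pt i0) \<noteq> 0"
  proof -
    have "\<And>i. i \<in> ?S - {i0} \<Longrightarrow> pt i0 \<noteq> pt i"
      using inj_onD[OF injA, of i0] i0 by auto
    then show ?thesis unfolding h_def poly_prod using finS by (simp add: prod_zero_iff)
  qed
  ultimately show False using \<open>y i0 \<noteq> 0\<close> unfolding f_def by simp
qed

end


lemma mpoly_cong: "(\<And>j. j < e \<Longrightarrow> x j = y j) \<Longrightarrow> mpoly_eval e l c x = mpoly_eval e l c y"
  unfolding mpoly_eval_def by (intro sum.cong refl arg_cong2[where f="(*)"] prod.cong) auto

lemma gate:
  fixes pt :: "nat \<Rightarrow> 'a::{finite,field}"
  assumes cardq: "card (UNIV :: 'a set) = 2 ^ t" and t1: "t \<ge> 1"
    and inj: "inj_on pt {..<n+k}" and k1: "1 \<le> k" and km: "k \<le> m" and mn: "m \<le> n"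
    and lm: "l * (m - 1) < n" and A: "A < k"
    and hu: "\<forall>j<e. us j \<in> vecs k"
  shows "apply_diag (transversal_phase t n (mpoly_eval e l c) (\<lambda>i. \<beta> * poly (lagb {..<n} pt i) (pt (n+A))))
            (tensor_state n e (\<lambda>j. logical_state (ev n pt ` P2 n k m pt) (\<lambda>u. ev n pt (encp n k pt u)) (us j)))
       = (\<lambda>xs. 1 * trsign t (\<beta> * mpoly_eval e l c (\<lambda>j. us j A))
            * tensor_state n e (\<lambda>j. logical_state (ev n pt ` P2 n k m pt) (\<lambda>u. ev n pt (encp n k pt u)) (us j)) xs)"
proof
  fix xs
  let ?C2 = "ev n pt ` P2 n k m pt"
  let ?Enc = "\<lambda>u. ev n pt (encp n k pt u)"
  let ?psi = "tensor_state n e (\<lambda>j. logical_state ?C2 ?Enc (us j))"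
  let ?bs = "\<lambda>i. \<beta> * poly (lagb {..<n} pt i) (pt (n+A))"
  show "apply_diag (transversal_phase t n (mpoly_eval e l c) ?bs) ?psi xs
      = 1 * trsign t (\<beta> * mpoly_eval e l c (\<lambda>j. us j A)) * ?psi xs"
  proof (cases "?psi xs = 0")
    case True then show ?thesis by (simp add: apply_diag_def)
  next
    case False
    then have xb: "xs \<in> blocks n e" and nz: "\<forall>j<e. logical_state ?C2 ?Enc (us j) (xs j) \<noteq> 0"
      unfolding tensor_state_def by (auto split: if_splits)
    have "\<forall>j. j < e \<longrightarrow> (\<exists>F. xs j = ev n pt F \<and> degree F < m \<and> poly F (pt (n+A)) = us j A)"
    proof (intro allI impI)
      fix j assume j: "j < e"
      then have "xs j \<in> {vadd (?Enc (us j)) c | c. c \<in> ?C2}"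
        using nz unfolding logical_state_def by (auto split: if_splits)
      then obtain g where g: "g \<in> P2 n k m pt" "xs j = vadd (?Enc (us j)) (ev n pt g)" by auto
      have "xs j = ev n pt (encp n k pt (us j) + g)" using g(2) by (simp add: ev_add)
      moreover have "degree (encp n k pt (us j) + g) < m"
        using degree_add_le_max[of "encp n k pt (us j)" g] encp_deg[OF inj k1 km mn, of "us j"] g(1) km
        unfolding P2_def by auto
      moreover have "poly (encp n k pt (us j) + g) (pt (n+A)) = us j A"
        using encp_eval[OF inj k1 km mn A] g(1) A unfolding P2_def by simp
      ultimately show "\<exists>F. xs j = ev n pt F \<and> degree F < m \<and> poly F (pt (n+A)) = us j A" by blast
    qed
    then obtain F where F: "\<forall>j<e. xs j = ev n pt (F j) \<and> degree (F j) < m \<and> poly (F j) (pt (n+A)) = us j A"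
      unfolding choice_iff' by blast
    define Gp where "Gp = (\<Sum>\<alpha>\<in>mono_exps e l. smult (c \<alpha>) (\<Prod>j<e. F j ^ \<alpha> j))"
    have pG: "\<And>z. poly Gp z = mpoly_eval e l c (\<lambda>j. poly (F j) z)"
      unfolding Gp_def mpoly_eval_def by (simp add: poly_sum poly_prod)
    have dG: "degree Gp < n"
    proof (cases "finite (mono_exps e l)")
      case False then show ?thesis unfolding Gp_def using lm mn k1 km by simp
    next
      case True
      have "degree Gp \<le> l * (m - 1)" unfolding Gp_def
      proof (intro degree_sum_le True)
        fix \<alpha> assume "\<alpha> \<in> mono_exps e l"
        then have sa: "(\<Sum>j<e. \<alpha> j) \<le> l" unfolding mono_exps_def by auto
        have "degree (smult (c \<alpha>) (\<Prod>j<e. F j ^ \<alpha> j)) \<le> degree (\<Prod>j<e. F j ^ \<alpha> j)" by (rule degree_smult_le)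
        also have "\<dots> \<le> sum (degree \<circ> (\<lambda>j. F j ^ \<alpha> j)) {..<e}" by (rule degree_prod_sum_le) simp
        also have "\<dots> \<le> (\<Sum>j<e. (m - 1) * \<alpha> j)"
        proof (intro sum_mono)
          fix j assume "j \<in> {..<e}"
          then have "degree (F j) \<le> m - 1" using F by fastforce
          then show "(degree \<circ> (\<lambda>j. F j ^ \<alpha> j)) j \<le> (m - 1) * \<alpha> j"
            using degree_power_le[of "F j" "\<alpha> j"] by (simp add: le_trans mult_right_mono)
        qed
        also have "\<dots> = (m - 1) * (\<Sum>j<e. \<alpha> j)" by (simp add: sum_distrib_left)
        also have "\<dots> \<le> l * (m - 1)" using sa by (simp add: mult.commute)
        finally show "degree (smult (c \<alpha>) (\<Prod>j<e. F j ^ \<alpha> j)) \<le> l * (m - 1)" .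
      qed
      then show ?thesis using lm by linarith
    qed
    have injA: "inj_on pt {..<n}" using inj by (rule inj_on_subset) auto
    have "mpoly_eval e l c (\<lambda>j. us j A) = poly Gp (pt (n+A))"
      unfolding pG using F by (intro mpoly_cong) auto
    also have "\<dots> = (\<Sum>i<n. poly (lagb {..<n} pt i) (pt (n+A)) * poly Gp (pt i))"
      using interp_eval[of "{..<n}" pt Gp "pt (n+A)"] injA dG by simp
    finally have "\<beta> * mpoly_eval e l c (\<lambda>j. us j A) = (\<Sum>i<n. ?bs i * mpoly_eval e l c (\<lambda>j. xs j i))"
    proof -
      assume eq: "mpoly_eval e l c (\<lambda>j. us j A) = (\<Sum>i<n. poly (lagb {..<n} pt i) (pt (n+A)) * poly Gp (pt i))"
      have "\<And>i. i < n \<Longrightarrow> poly Gp (pt i) = mpoly_eval e l c (\<lambda>j. xs j i)"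
        unfolding pG using F by (intro mpoly_cong) (auto simp: ev_def)
      then show ?thesis unfolding eq sum_distrib_left by (intro sum.cong refl) (simp add: mult.assoc)
    qed
    then have "trsign t (\<beta> * mpoly_eval e l c (\<lambda>j. us j A)) = transversal_phase t n (mpoly_eval e l c) ?bs xs"
      unfolding transversal_phase_def using trsign_sum[OF cardq t1, of "{..<n}"] by simp
    then show ?thesis by (simp add: apply_diag_def)
  qed
qed


theorem theorem5p3:
  fixes lbar m n k t :: nat
  assumes "real m < 1 + real n / real lbar"
    and "1 \<le> k" and "k \<le> m"
    and "card (UNIV :: 'a::{finite,field} set) = 2 ^ t"
    and "n + k \<le> 2 ^ t"
  shows "\<exists>(C1 :: (nat \<Rightarrow> 'a) set) C2 Enc.
     css_code n k C1 C2 Enc \<and>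
     css_distance_ge n C1 C2 (min (n - m + 1) (m - k + 1)) \<and>
     (\<forall>e l. 1 \<le> e \<longrightarrow> e \<le> lbar \<longrightarrow> l \<le> lbar \<longrightarrow>
        (\<forall>(c :: (nat \<Rightarrow> nat) \<Rightarrow> 'a) A (\<beta> :: 'a). A < k \<longrightarrow>
           (\<exists>\<beta>s ph. cmod ph = 1 \<and>
              (\<forall>us. (\<forall>j<e. us j \<in> vecs k) \<longrightarrow>
                 apply_diag (transversal_phase t n (mpoly_eval e l c) \<beta>s)
                   (tensor_state n e (\<lambda>j. logical_state C2 Enc (us j)))
                 = (\<lambda>xs. ph * trsign t (\<beta> * mpoly_eval e l c (\<lambda>j. us j A))
                          * tensor_state n e (\<lambda>j. logical_state C2 Enc (us j)) xs)))))"
proof -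
  note k1 = assms(2) and km = assms(3) and cardq = assms(4)
  have lb: "lbar \<ge> 1"
  proof (rule ccontr)
    assume "\<not> lbar \<ge> 1" then have "lbar = 0" by simp
    then show False using assms(1-3) by simp
  qed
  have m1: "m \<ge> 1" using k1 km by simp
  have "real m * real lbar < real lbar + real n"
    using assms(1) lb by (simp add: field_simps)
  then have "real (lbar * (m - 1)) < real n" using m1 by (simp add: of_nat_diff algebra_simps)
  then have lm: "lbar * (m - 1) < n" by linarith
  have mn: "m \<le> n"
  proof -
    have "m - 1 \<le> lbar * (m - 1)" using lb by simp
    then show ?thesis using lm m1 by linarith
  qed
  have t1: "t \<ge> 1"
  proof (rule ccontr)
    assume "\<not> t \<ge> 1" then have "t = 0" by simp
    then show False using assms(5) k1 km mn by simp
  qed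
  obtain pt :: "nat \<Rightarrow> 'a" where inj: "inj_on pt {..<n+k}"
    using card_le_inj[of "{..<n+k}" "UNIV :: 'a set"] cardq assms(5) by auto
  let ?C1 = "ev n pt ` P1 m"
  let ?C2 = "ev n pt ` P2 n k m pt"
  let ?Enc = "\<lambda>u. ev n pt (encp n k pt u)"
  show ?thesis
    apply (rule exI[of _ ?C1], rule exI[of _ ?C2], rule exI[of _ ?Enc])
  proof (intro conjI)
    show "css_code n k ?C1 ?C2 ?Enc" by (rule css[OF inj k1 km mn])
    show "css_distance_ge n ?C1 ?C2 (min (n - m + 1) (m - k + 1))"
      unfolding css_distance_ge_def
    proof
      fix v assume "v \<in> (?C1 - ?C2) \<union> (dual_code n ?C2 - dual_code n ?C1)"
      then show "min (n - m + 1) (m - k + 1) \<le> hwt n v"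
        using dist1[OF inj k1 km mn, of v] dist2[OF inj k1 km mn, of v] by auto
    qed
  next
    show "\<forall>e l. 1 \<le> e \<longrightarrow> e \<le> lbar \<longrightarrow> l \<le> lbar \<longrightarrow>
        (\<forall>(c :: (nat \<Rightarrow> nat) \<Rightarrow> 'a) A (\<beta> :: 'a). A < k \<longrightarrow>
           (\<exists>\<beta>s ph. cmod ph = 1 \<and>
              (\<forall>us. (\<forall>j<e. us j \<in> vecs k) \<longrightarrow>
                 apply_diag (transversal_phase t n (mpoly_eval e l c) \<beta>s)
                   (tensor_state n e (\<lambda>j. logical_state ?C2 ?Enc (us j)))
                 = (\<lambda>xs. ph * trsign t (\<beta> * mpoly_eval e l c (\<lambda>j. us j A))
                          * tensor_state n e (\<lambda>j. logical_state ?C2 ?Enc (us j)) xs))))"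
    proof (intro allI impI)
    fix e l c A and \<beta> :: 'a
    assume "1 \<le> e" "e \<le> lbar" and ll: "l \<le> lbar" and A: "A < k"
    have llm: "l * (m - 1) < n" using lm ll mult_right_mono[OF ll, of "m-1"] by linarith
    show "\<exists>\<beta>s ph. cmod ph = 1 \<and>
              (\<forall>us. (\<forall>j<e. us j \<in> vecs k) \<longrightarrow>
                 apply_diag (transversal_phase t n (mpoly_eval e l c) \<beta>s)
                   (tensor_state n e (\<lambda>j. logical_state ?C2 ?Enc (us j)))
                 = (\<lambda>xs. ph * trsign t (\<beta> * mpoly_eval e l c (\<lambda>j. us j A))
                          * tensor_state n e (\<lambda>j. logical_state ?C2 ?Enc (us j)) xs))"
      using gate[OF cardq t1 inj k1 km mn llm A]
      by (intro exI[of _ "\<lambda>i. \<beta> * poly (lagb {..<n} pt i) (pt (n+A))"] exI[of _ 1]) auto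
  qed
  qed
qed

end
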